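(* Let $0<a<1$ and define $\eta:\mathbb C_+\to\mathbb C$, $\mathbb C_+=\{\operatorname{Re}w>0\}$, by $\eta(w)=w-(\log(w+3))^a$ (principal branches). Then $\eta$ is univalent on $\mathbb C_+$, and $\Omega_0=\eta(\mathbb C_+)$ is a logarithmic starlike at infinity domain with $p$-frequencies which is not contained in any half-plane.
   Context: A logarithmic starlike at infinity domain is $\{x+iy:x>\psi(y)\}$ where $\psi:\mathbb R\to\mathbb R$ is differentiable with $|\psi'|\le K$ for some $K>0$, and there exist $R>0$ and $0<b<1$ with $\psi(y)\ge -b\log|y|$ for $|y|\ge R$. Such a domain $\Omega_0$ has $p$-frequencies if there exists $p_0\ge1$ such that $e^{\lambda z}\in H^{p_0}(\Omega_0)$ for all $\lambda\le0$, where for a simply connected domain $G\subsetneq\mathbb C$ and $p\in[1,\infty)$, $H^p(G)$ is the space of holomorphic $f$ on $G$ such that $|f|^p$ has a harmonic majorant. *)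

theory Defs
  imports "HOL-Analysis.Analysis"
begin

text \<open>C^2 is expressed via existence of the first partials and existence and
continuity of all second partials (x = real direction, y = imaginary direction).\<close>
definition harmonic_on :: "(complex \<Rightarrow> real) \<Rightarrow> complex set \<Rightarrow> bool" where
  "harmonic_on u G \<longleftrightarrow> open G \<and>
     (\<exists>ux uy uxx uxy uyx uyy :: complex \<Rightarrow> real.
        (\<forall>z\<in>G.
           ((\<lambda>t. u (z + of_real t)) has_real_derivative ux z) (at 0) \<and>
           ((\<lambda>t. u (z + \<i> * of_real t)) has_real_derivative uy z) (at 0) \<and>
           ((\<lambda>t. ux (z + of_real t)) has_real_derivative uxx z) (at 0) \<and>
           ((\<lambda>t. ux (z + \<i> * of_real t)) has_real_derivative uxy z) (at 0) \<and>
           ((\<lambda>t. uy (z + of_real t)) has_real_derivative uyx z) (at 0) \<and>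
           ((\<lambda>t. uy (z + \<i> * of_real t)) has_real_derivative uyy z) (at 0) \<and>
           uxx z + uyy z = 0) \<and>
        continuous_on G uxx \<and> continuous_on G uxy \<and>
        continuous_on G uyx \<and> continuous_on G uyy)"

definition hardy_space :: "real \<Rightarrow> complex set \<Rightarrow> (complex \<Rightarrow> complex) set" where
  "hardy_space p G = {f. f holomorphic_on G \<and>
      (\<exists>u. harmonic_on u G \<and> (\<forall>z\<in>G. norm (f z) powr p \<le> u z))}"

definition log_starlike_at_infinity :: "complex set \<Rightarrow> bool" where
  "log_starlike_at_infinity \<Omega> \<longleftrightarrow>
     (\<exists>\<psi> :: real \<Rightarrow> real.
        (\<forall>y. \<psi> differentiable (at y)) \<and>
        (\<exists>K>0. \<forall>y. \<bar>deriv \<psi> y\<bar> \<le> K) \<and>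
        (\<exists>R>0. \<exists>b. 0 < b \<and> b < 1 \<and> (\<forall>y. \<bar>y\<bar> \<ge> R \<longrightarrow> \<psi> y \<ge> - b * ln \<bar>y\<bar>)) \<and>
        \<Omega> = {z. Re z > \<psi> (Im z)})"

definition has_p_frequencies :: "complex set \<Rightarrow> bool" where
  "has_p_frequencies \<Omega> \<longleftrightarrow>
     (\<exists>p0\<ge>1. \<forall>l::real. l \<le> 0 \<longrightarrow> (\<lambda>z. exp (of_real l * z)) \<in> hardy_space p0 \<Omega>)"

definition eta :: "real \<Rightarrow> complex \<Rightarrow> complex" where
  "eta a w = w - (Ln (w + 3)) powr (of_real a)"

end

theory Submission
  imports Defs "HOL-Complex_Analysis.Complex_Analysis"
begin


definition gg :: "real \<Rightarrow> complex \<Rightarrow> complex" where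
  "gg a w = (Ln (w + 3)) powr (of_real a)"

definition gd :: "real \<Rightarrow> complex \<Rightarrow> complex" where
  "gd a w = of_real a * (Ln (w + 3)) powr (of_real a - 1) * inverse (w + 3)"

lemma eta_gg: "eta a w = w - gg a w"
  by (simp add: eta_def gg_def)

lemma Re_Ln3: assumes "-2 < Re w" shows "Re (Ln (w + 3)) = ln (norm (w + 3))"
  and "0 < Re (Ln (w + 3))"
proof -
  have "1 < Re (w + 3)" using assms by simp
  also have "\<dots> \<le> norm (w+3)" by (rule complex_Re_le_cmod)
  finally have n1: "1 < norm (w+3)" .
  then have "w + 3 \<noteq> 0" by auto
  then show e: "Re (Ln (w + 3)) = ln (norm (w + 3))" by (simp add: Re_Ln)
  show "0 < Re (Ln (w + 3))" unfolding e using n1 by (simp add: ln_gt_zero)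
qed

lemma not_nonpos: assumes "0 < Re z" shows "z \<notin> \<real>\<^sub>\<le>\<^sub>0"
  using assms by (auto simp: complex_nonpos_Reals_iff)

lemma gg_deriv: assumes "-2 < Re w"
  shows "(gg a has_field_derivative gd a w) (at w)"
proof -
  have h1: "w + 3 \<notin> \<real>\<^sub>\<le>\<^sub>0" using assms by (intro not_nonpos) simp
  have h2: "Ln (w + 3) \<notin> \<real>\<^sub>\<le>\<^sub>0" using Re_Ln3(2)[OF assms] by (intro not_nonpos)
  have d1: "((\<lambda>w. Ln (w + 3)) has_field_derivative inverse (w + 3)) (at w)"
  proof -
    have "((\<lambda>w. w + 3) has_field_derivative 1) (at w)" by (auto intro!: derivative_eq_intros)
    from DERIV_chain[OF has_field_derivative_Ln[OF h1] this] show ?thesis by (simp add: o_def)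
  qed
  have "((\<lambda>z. z powr of_real a) \<circ> (\<lambda>w. Ln (w + 3)) has_field_derivative
        (of_real a * Ln (w + 3) powr (of_real a - 1)) * inverse (w + 3)) (at w)"
    by (rule DERIV_chain[OF has_field_derivative_powr[OF h2] d1])
  moreover have "gg a = (\<lambda>x. Ln (x + 3) powr complex_of_real a)" by (simp add: fun_eq_iff gg_def)
  ultimately show ?thesis by (simp add: gd_def o_def)
qed

lemma gd_bound: assumes "0 \<le> Re w" "0 < a" "a < 1"
  shows "norm (gd a w) \<le> a / 3"
proof -
  have r: "-2 < Re w" using assms by simp
  have "ln 3 \<ge> (1::real)" using exp_le by (simp add: ln_ge_iff)
  have "3 \<le> Re (w + 3)" using assms by simp
  also have "\<dots> \<le> norm (w+3)" by (rule complex_Re_le_cmod)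
  finally have n3: "3 \<le> norm (w+3)" .
  have "1 \<le> ln (norm (w+3))" using n3 \<open>ln 3 \<ge> 1\<close>
    by (smt (verit) ln_le_cancel_iff)
  also have "\<dots> = Re (Ln (w + 3))" using Re_Ln3[OF r] by simp
  also have "\<dots> \<le> norm (Ln (w+3))" by (rule complex_Re_le_cmod)
  finally have L1: "1 \<le> norm (Ln (w+3))" .
  have p: "norm (Ln (w + 3) powr (of_real a - 1)) = norm (Ln (w+3)) powr (a - 1)"
    by (subst norm_powr_real_powr') auto
  have p1: "norm (Ln (w+3)) powr (a - 1) \<le> 1"
  proof -
    have "norm (Ln (w+3)) powr (a - 1) \<le> norm (Ln (w+3)) powr 0"
      using L1 assms by (intro powr_mono) auto
    then show ?thesis using L1 by (auto split: if_splits)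
  qed
  have "norm (gd a w) = a * norm (Ln (w+3)) powr (a - 1) / norm (w + 3)"
    using assms by (simp add: gd_def norm_mult norm_inverse p divide_inverse)
  also have "\<dots> \<le> a * 1 / 3"
    using p1 n3 assms by (intro frac_le mult_left_mono) auto
  finally show ?thesis by simp
qed

lemma gg_lip: assumes "0 \<le> Re w1" "0 \<le> Re w2" "0 < a" "a < 1"
  shows "norm (gg a w1 - gg a w2) \<le> a / 3 * norm (w1 - w2)"
proof (rule field_differentiable_bound[of "{w. 0 \<le> Re w}" "gg a" "gd a"])
  show "convex {w. 0 \<le> Re w}" using convex_halfspace_Re_ge[of 0] by simp
  show "\<And>z. z \<in> {w. 0 \<le> Re w} \<Longrightarrow> norm (gd a z) \<le> a / 3"
    using gd_bound assms by auto
qed (use assms in \<open>auto intro!: has_field_derivative_at_within gg_deriv\<close>)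



lemma dir_deriv:
  assumes "(f has_field_derivative f') (at (z + c * of_real t))"
  shows "((\<lambda>t. Re (f (z + c * of_real t))) has_real_derivative Re (c * f')) (at t)"
    and "((\<lambda>t. Im (f (z + c * of_real t))) has_real_derivative Im (c * f')) (at t)"
proof -
  have "((\<lambda>x. z + c * x) has_field_derivative c) (at (of_real t))"
    by (auto intro!: derivative_eq_intros)
  then have "((\<lambda>t. z + c * of_real t) has_vector_derivative c) (at t)"
    by (rule has_vector_derivative_real_field)
  from field_vector_diff_chain_at[OF this assms]
  have vd: "((\<lambda>t. f (z + c * of_real t)) has_vector_derivative (c * f')) (at t)"
    by (simp add: o_def)
  show "((\<lambda>t. Re (f (z + c * of_real t))) has_real_derivative Re (c * f')) (at t)"
    and "((\<lambda>t. Im (f (z + c * of_real t))) has_real_derivative Im (c * f')) (at t)"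
    by (rule has_field_derivative_Re[OF vd], rule has_field_derivative_Im[OF vd])
qed

lemma eta_deriv: assumes "-2 < Re w"
  shows "(eta a has_field_derivative (1 - gd a w)) (at w)"
proof -
  have "eta a = (\<lambda>w. w - gg a w)" by (simp add: fun_eq_iff eta_gg)
  then show ?thesis using gg_deriv[OF assms, of a] by (auto intro!: derivative_eq_intros)
qed

lemma eta_isCont: assumes "-2 < Re w" shows "isCont (eta a) w"
  using eta_deriv[OF assms] DERIV_isCont by blast

lemma gg_lip3: assumes "0 \<le> Re w1" "0 \<le> Re w2" "0 < a" "a < 1"
  shows "3 * norm (gg a w2 - gg a w1) \<le> \<bar>Re (w2 - w1)\<bar> + \<bar>Im (w2 - w1)\<bar>"
proof -
  have "norm (gg a w2 - gg a w1) \<le> a / 3 * norm (w2 - w1)" using gg_lip assms by blast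
  also have "\<dots> \<le> 1 / 3 * norm (w2 - w1)" using assms by (intro mult_right_mono) auto
  also have "\<dots> \<le> 1 / 3 * (\<bar>Re (w2 - w1)\<bar> + \<bar>Im (w2 - w1)\<bar>)"
    by (intro mult_left_mono cmod_le) auto
  finally show ?thesis by (simp add: field_simps)
qed

lemma eta_diff: "eta a w2 - eta a w1 = (w2 - w1) - (gg a w2 - gg a w1)"
  by (simp add: eta_gg)

lemma eta_inj: assumes "0 \<le> Re w1" "0 \<le> Re w2" "0 < a" "a < 1" "eta a w1 = eta a w2"
  shows "w1 = w2"
proof -
  have "norm (gg a w2 - gg a w1) \<le> a / 3 * norm (w2 - w1)" using gg_lip assms by blast
  moreover have "w2 - w1 = gg a w2 - gg a w1" using eta_diff[of a w2 w1] assms(5) by simp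
  ultimately have "norm (w2 - w1) \<le> a / 3 * norm (w2 - w1)" by simp
  then have "(1 - a/3) * norm (w2 - w1) \<le> 0" by (simp add: algebra_simps)
  moreover have "0 < 1 - a/3" using assms by simp
  ultimately have "norm (w2 - w1) \<le> 0" by (simp add: mult_le_0_iff)
  then show ?thesis by simp
qed

lemma eta_vert: assumes "0 \<le> s" "t1 \<le> t2" "0 < a" "a < 1"
  shows "3 * (Im (eta a (Complex s t2)) - Im (eta a (Complex s t1))) \<ge> 2 * (t2 - t1)"
proof -
  have l: "3 * norm (gg a (Complex s t2) - gg a (Complex s t1)) \<le> (t2 - t1)"
    using gg_lip3[of "Complex s t1" "Complex s t2" a] assms by simp
  have "Im (eta a (Complex s t2)) - Im (eta a (Complex s t1)) = (t2 - t1) - Im (gg a (Complex s t2) - gg a (Complex s t1))"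
    using arg_cong[OF eta_diff[of a "Complex s t2" "Complex s t1"], of Im] by simp
  moreover have "\<bar>Im (gg a (Complex s t2) - gg a (Complex s t1))\<bar> \<le> norm (gg a (Complex s t2) - gg a (Complex s t1))"
    by (rule abs_Im_le_cmod)
  ultimately show ?thesis using l by (simp add: abs_le_iff)
qed

lemma eta_level: assumes "0 \<le> Re w1" "0 \<le> Re w2" "0 < a" "a < 1"
  and "Im (eta a w1) = Im (eta a w2)"
  shows "2 * \<bar>Im (w2 - w1)\<bar> \<le> \<bar>Re (w2 - w1)\<bar>"
    and "Re (w2 - w1) \<ge> 0 \<Longrightarrow> Re (eta a w2) - Re (eta a w1) \<ge> Re (w2 - w1) / 2"
proof -
  let ?e = "gg a w2 - gg a w1"
  have l: "3 * norm ?e \<le> \<bar>Re (w2 - w1)\<bar> + \<bar>Im (w2 - w1)\<bar>" using gg_lip3 assms by blast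
  have d: "eta a w2 - eta a w1 = (w2 - w1) - ?e" by (rule eta_diff)
  have i: "Im (w2 - w1) = Im ?e" using arg_cong[OF d, of Im] assms(5) by simp
  have r: "Re (eta a w2) - Re (eta a w1) = Re (w2 - w1) - Re ?e" using arg_cong[OF d, of Re] by simp
  have ai: "\<bar>Im ?e\<bar> \<le> norm ?e" by (rule abs_Im_le_cmod)
  have ar: "\<bar>Re ?e\<bar> \<le> norm ?e" by (rule abs_Re_le_cmod)
  have ii: "\<bar>Im (w2 - w1)\<bar> \<le> norm ?e" using i ai by simp
  show "2 * \<bar>Im (w2 - w1)\<bar> \<le> \<bar>Re (w2 - w1)\<bar>" using l ii by linarith
  assume "Re (w2 - w1) \<ge> 0"
  then show "Re (eta a w2) - Re (eta a w1) \<ge> Re (w2 - w1) / 2"  using l ii ar r by linarith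
qed



definition TT :: "real \<Rightarrow> real \<Rightarrow> real \<Rightarrow> real" where
  "TT a y s = (THE t. Im (eta a (Complex s t)) = y)"

definition psi :: "real \<Rightarrow> real \<Rightarrow> real" where
  "psi a y = Re (eta a (Complex 0 (TT a y 0)))"

lemma isCont_Complex2: "isCont (\<lambda>t. Complex s t) t"
  by (simp add: Complex_eq)

lemma isCont_Complex1: "isCont (\<lambda>s. Complex s (f s)) s" if "isCont f s"
  using that by (simp add: Complex_eq)

lemma cont_vert: assumes "0 \<le> s" shows "continuous_on A (\<lambda>t. Im (eta a (Complex s t)))"
proof (intro continuous_at_imp_continuous_on ballI)
  fix t
  have "isCont (eta a) (Complex s t)" using assms by (intro eta_isCont) simp
  then have "isCont (\<lambda>t. eta a (Complex s t)) t"
    using isCont_o2[OF isCont_Complex2] by blast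
  then show "isCont (\<lambda>t. Im (eta a (Complex s t))) t" by (rule continuous_Im)
qed

lemma T_uniq: assumes "0 \<le> s" "0 < a" "a < 1"
  "Im (eta a (Complex s t1)) = Im (eta a (Complex s t2))"
  shows "t1 = t2"
proof (rule ccontr)
  assume "t1 \<noteq> t2"
  then consider "t1 < t2" | "t2 < t1" by linarith
  then show False
  proof cases
    case 1 then show False using eta_vert[of s t1 t2 a] assms by auto
  next
    case 2 then show False using eta_vert[of s t2 t1 a] assms by auto
  qed
qed

lemma T_ex: assumes "0 \<le> s" "0 < a" "a < 1"
  shows "\<exists>t. Im (eta a (Complex s t)) = y"
proof -
  let ?f = "\<lambda>t. Im (eta a (Complex s t))"
  show ?thesis
  proof (cases "?f 0 \<le> y")
    case True
    define b where "b = 3/2 * (y - ?f 0)"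
    have b0: "0 \<le> b" using True by (simp add: b_def)
    have "3 * (?f b - ?f 0) \<ge> 2 * (b - 0)" using eta_vert[of s 0 b a] assms b0 by auto
    then have "y \<le> ?f b" by (simp add: b_def)
    from IVT'[of ?f 0 y b, OF True this b0 cont_vert[OF assms(1)]]
    show ?thesis by blast
  next
    case False
    define b where "b = - 3/2 * (?f 0 - y)"
    have b0: "b \<le> 0" using False by (simp add: b_def)
    have "3 * (?f 0 - ?f b) \<ge> 2 * (0 - b)" using eta_vert[of s b 0 a] assms b0 by auto
    then have "?f b \<le> y" by (simp add: b_def)
    from IVT'[of ?f b y 0, OF this _ b0 cont_vert[OF assms(1)]] False
    show ?thesis by auto
  qed
qed

lemma T_prop: assumes "0 \<le> s" "0 < a" "a < 1"
  shows "Im (eta a (Complex s (TT a y s))) = y"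
proof -
  have "\<exists>!t. Im (eta a (Complex s t)) = y"
    using T_ex[OF assms] T_uniq[OF assms] by metis
  then show ?thesis unfolding TT_def by (rule theI')
qed

lemma T_eqI: assumes "0 \<le> s" "0 < a" "a < 1" "Im (eta a (Complex s t)) = y"
  shows "TT a y s = t"
  using T_uniq[OF assms(1-3)] T_prop[OF assms(1-3)] assms(4) by metis

lemma T_lip: assumes "0 \<le> s1" "0 \<le> s2" "0 < a" "a < 1"
  shows "2 * \<bar>TT a y s2 - TT a y s1\<bar> \<le> \<bar>s2 - s1\<bar>"
  using eta_level(1)[of "Complex s1 (TT a y s1)" "Complex s2 (TT a y s2)" a]
    T_prop[OF assms(1,3,4)] T_prop[OF assms(2,3,4)] assms by simp

lemma T_cont: assumes "0 < a" "a < 1"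
  shows "continuous_on {0..} (TT a y)"
proof (rule lipschitz_on_continuous_on[of 1], rule lipschitz_onI)
  fix x z :: real assume "x \<in> {0..}" "z \<in> {0..}"
  then show "dist (TT a y x) (TT a y z) \<le> 1 * dist x z"
  proof -
    have h: "2 * \<bar>TT a y x - TT a y z\<bar> \<le> \<bar>x - z\<bar>" using T_lip[of z x a y] assms \<open>x \<in> {0..}\<close> \<open>z \<in> {0..}\<close> by auto
    have aux: "2 * \<bar>u\<bar> \<le> \<bar>v\<bar> \<Longrightarrow> \<bar>u\<bar> \<le> 1 * \<bar>v\<bar>" for u v :: real by linarith
    from aux[OF h] show ?thesis unfolding dist_real_def .
  qed
qed simp

lemma Omega_eq: assumes "0 < a" "a < 1"
  shows "eta a ` {w. 0 < Re w} = {z. psi a (Im z) < Re z}"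
proof safe
  fix w assume w: "0 < Re w"
  let ?y = "Im (eta a w)"
  let ?w1 = "Complex 0 (TT a ?y 0)"
  have "Im (eta a ?w1) = Im (eta a w)" using T_prop[of 0 a ?y] assms by simp
  from eta_level(2)[of ?w1 w a, OF _ _ assms this] w
  show "psi a (Im (eta a w)) < Re (eta a w)" by (simp add: psi_def)
next
  fix z assume z: "psi a (Im z) < Re z"
  define y where "y = Im z"
  define F where "F = (\<lambda>s. Re (eta a (Complex s (TT a y s))))"
  have F0: "F 0 < Re z" using z by (simp add: F_def psi_def y_def)
  define S where "S = 2 * (Re z - F 0)"
  have S0: "0 \<le> S" using F0 by (simp add: S_def)
  have "Im (eta a (Complex 0 (TT a y 0))) = Im (eta a (Complex S (TT a y S)))"
    using T_prop[of 0 a y] T_prop[of S a y] assms S0 by simp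
  from eta_level(2)[OF _ _ assms this] S0
  have "2 * (F S - F 0) \<ge> S" by (simp add: F_def)
  then have FS: "Re z \<le> F S" by (simp add: S_def)
  have cF: "continuous_on {0..S} F"
  proof -
    have "continuous_on {0..S} (TT a y)"
      using T_cont[OF assms, of y] by (rule continuous_on_subset) auto
    then have c1: "continuous_on {0..S} (\<lambda>s. Complex s (TT a y s))"
      unfolding Complex_eq by (intro continuous_intros)
    have c2: "continuous_on {w. -2 < Re w} (eta a)"
      by (intro continuous_at_imp_continuous_on ballI eta_isCont) simp
    have "continuous_on {0..S} (\<lambda>s. eta a (Complex s (TT a y s)))"
      by (rule continuous_on_compose2[OF c2 c1]) auto
    then show ?thesis unfolding F_def by (intro continuous_intros)
  qed
  from IVT'[of F 0 "Re z" S, OF less_imp_le[OF F0] FS S0 cF]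
  obtain s where s: "0 \<le> s" "s \<le> S" "F s = Re z" by blast
  have "s \<noteq> 0" using s F0 by auto
  then have "0 < Re (Complex s (TT a y s))" using s by simp
  moreover have "eta a (Complex s (TT a y s)) = z"
    using s T_prop[of s a y] assms by (simp add: complex_eq_iff F_def y_def)
  ultimately show "z \<in> eta a ` {w. 0 < Re w}" by force
qed



lemma pow_sub: assumes "0 < a" "a < 1" "0 < e"
  shows "\<exists>M\<ge>0. \<forall>u::real. 0 \<le> u \<longrightarrow> u powr a \<le> e * u + M"
proof -
  define N where "N = e powr (1 / (a - 1))"
  have N0: "0 < N" using assms by (simp add: N_def)
  have Ne: "N powr (a - 1) = e" using assms by (simp add: N_def powr_powr)
  show ?thesis
  proof (intro exI[of _ "N powr a"] conjI allI impI)
    fix u :: real assume u: "0 \<le> u"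
    show "u powr a \<le> e * u + N powr a"
    proof (cases "u \<le> N")
      case True
      then have "u powr a \<le> N powr a" using u assms by (intro powr_mono2) auto
      then show ?thesis using u assms by (smt (verit) mult_nonneg_nonneg)
    next
      case False
      then have up: "0 < u" using N0 by simp
      have "u powr a = u * u powr (a - 1)" using up by (simp add: powr_mult_base)
      also have "\<dots> \<le> u * N powr (a - 1)"
        using False N0 assms up by (intro mult_left_mono powr_mono2') auto
      also have "\<dots> = e * u" using Ne by simp
      finally have "u powr a \<le> e * u" .
      moreover have "0 \<le> N powr a" by simp
      ultimately show ?thesis by linarith
    qed
  qed simp
qed

lemma CI: "Complex 0 t = 0 + \<i> * of_real t" by (simp add: complex_eq_iff)

lemma h_deriv: "((\<lambda>t. Im (eta a (Complex 0 t))) has_real_derivative Re (1 - gd a (Complex 0 t))) (at t)"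
proof -
  have "(eta a has_field_derivative (1 - gd a (0 + \<i> * of_real t))) (at (0 + \<i> * of_real t))"
    by (rule eta_deriv) simp
  from dir_deriv(2)[OF this] show ?thesis by (simp add: CI)
qed

lemma p_deriv: "((\<lambda>t. Re (eta a (Complex 0 t))) has_real_derivative Im (gd a (Complex 0 t))) (at t)"
proof -
  have "(eta a has_field_derivative (1 - gd a (0 + \<i> * of_real t))) (at (0 + \<i> * of_real t))"
    by (rule eta_deriv) simp
  from dir_deriv(1)[OF this] show ?thesis by (simp add: CI)
qed

lemma tau_lip: assumes "0 < a" "a < 1"
  shows "2 * \<bar>TT a y1 0 - TT a y2 0\<bar> \<le> 3 * \<bar>y1 - y2\<bar>"
proof -
  have h1: "Im (eta a (Complex 0 (TT a y1 0))) = y1" using T_prop assms by simp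
  have h2: "Im (eta a (Complex 0 (TT a y2 0))) = y2" using T_prop assms by simp
  have aux: "t1 \<le> t2 \<Longrightarrow> 2*(t2 - t1) \<le> 3*(u2-u1) \<Longrightarrow> 2*\<bar>t1 - t2\<bar> \<le> 3*\<bar>u1-u2\<bar>"
    for t1 t2 u1 u2 :: real by (simp add: abs_if)
  show ?thesis
  proof (cases "TT a y1 0 \<le> TT a y2 0")
    case True
    from eta_vert[of 0 "TT a y1 0" "TT a y2 0" a] True h1 h2 assms
    have "2*(TT a y2 0 - TT a y1 0) \<le> 3*(y2 - y1)" by simp
    from aux[OF True this] show ?thesis .
  next
    case False
    then have F: "TT a y2 0 \<le> TT a y1 0" by simp
    from eta_vert[of 0 "TT a y2 0" "TT a y1 0" a] F h1 h2 assms
    have "2*(TT a y1 0 - TT a y2 0) \<le> 3*(y1 - y2)" by simp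
    from aux[OF F this] show ?thesis by (simp add: abs_minus_commute)
  qed
qed

lemma psi_deriv: assumes "0 < a" "a < 1"
  shows "(psi a has_real_derivative
     Im (gd a (Complex 0 (TT a y 0))) * inverse (Re (1 - gd a (Complex 0 (TT a y 0))))) (at y)"
    and "\<bar>Im (gd a (Complex 0 (TT a y 0))) * inverse (Re (1 - gd a (Complex 0 (TT a y 0))))\<bar> \<le> 1"
proof -
  let ?t = "TT a y 0"
  let ?D = "Re (1 - gd a (Complex 0 ?t))"
  let ?G = "gd a (Complex 0 ?t)"
  have gb: "norm ?G \<le> a / 3" using gd_bound assms by simp
  have "Re ?G \<le> norm ?G" by (rule complex_Re_le_cmod)
  then have D: "2/3 \<le> ?D" using gb assms by simp
  have ct: "isCont (\<lambda>y. TT a y 0) y"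
  proof -
    have "continuous_on UNIV (\<lambda>y. TT a y 0)"
    proof (rule lipschitz_on_continuous_on[of "3/2"], rule lipschitz_onI)
      fix x z :: real
      have "2 * \<bar>TT a x 0 - TT a z 0\<bar> \<le> 3 * \<bar>x - z\<bar>" by (rule tau_lip[OF assms])
      then show "dist (TT a x 0) (TT a z 0) \<le> 3/2 * dist x z" by (simp add: dist_real_def)
    qed simp
    then show ?thesis by (simp add: continuous_on_eq_continuous_at)
  qed
  have tau_d: "((\<lambda>y. TT a y 0) has_real_derivative inverse ?D) (at y)"
  proof (rule DERIV_inverse_function[where f = "\<lambda>t. Im (eta a (Complex 0 t))" and a = "y - 1" and b = "y + 1"])
    show "((\<lambda>t. Im (eta a (Complex 0 t))) has_real_derivative ?D) (at (TT a y 0))" by (rule h_deriv)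
    show "?D \<noteq> 0" using D by simp
    show "\<And>z. y - 1 < z \<Longrightarrow> z < y + 1 \<Longrightarrow> Im (eta a (Complex 0 (TT a z 0))) = z"
      using T_prop assms by simp
  qed (use ct in auto)
  from DERIV_chain2[OF p_deriv tau_d]
  show "(psi a has_real_derivative Im ?G * inverse ?D) (at y)"
    unfolding psi_def[abs_def] by simp
  have "\<bar>Im ?G\<bar> \<le> norm ?G" by (rule abs_Im_le_cmod)
  then have "\<bar>Im ?G\<bar> \<le> 1/3" using gb assms by simp
  moreover have "0 < inverse ?D" using D by simp
  moreover have "inverse ?D \<le> inverse (2/3)" using D by (intro le_imp_inverse_le) auto
  then have "inverse ?D \<le> 3/2" by simp
  ultimately have "\<bar>Im ?G\<bar> * inverse ?D \<le> 1/3 * (3/2)"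
    by (intro mult_mono) auto
  then show "\<bar>Im ?G * inverse ?D\<bar> \<le> 1" using \<open>0 < inverse ?D\<close> by (simp add: abs_mult)
qed



lemma psi_growth: assumes "0 < a" "a < 1"
  shows "\<exists>R>0. \<forall>y. \<bar>y\<bar> \<ge> R \<longrightarrow> psi a y \<ge> - (1/2) * ln \<bar>y\<bar>"
proof -
  obtain M where M0: "M \<ge> 0" and M: "\<And>u::real. 0 \<le> u \<Longrightarrow> u powr a \<le> 1/8 * u + M"
    using pow_sub[OF assms, of "1/8"] by auto
  define R where "R = max (4 + 2 * M) (exp (2 + 3 * M))"
  have ln3: "ln (3::real) \<le> 2" using ln_le_minus_one[of 3] by simp
  show ?thesis
  proof (intro exI[of _ R] conjI allI impI)
    show "0 < R" unfolding R_def using M0 by simp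
    fix y :: real assume yR: "R \<le> \<bar>y\<bar>"
    define t where "t = TT a y 0"
    define w where "w = Complex 0 t"
    define L where "L = Ln (w + 3)"
    define G where "G = norm (gg a w)"
    define nL where "nL = norm L"
    define Y where "Y = \<bar>y\<bar>"
    define At where "At = \<bar>t\<bar>"
    have ypos: "0 < Y" using yR \<open>0 < R\<close> \<open>0 < R\<close> unfolding Y_def R_def using M0 by linarith
    have yp: "Im (eta a w) = y" unfolding w_def t_def using T_prop assms by simp
    have psi_eq: "psi a y = - Re (gg a w)" unfolding psi_def w_def t_def by (simp add: eta_gg)
    have "Re (gg a w) \<le> G" unfolding G_def by (rule complex_Re_le_cmod)
    then have psiG: "psi a y \<ge> - G" using psi_eq by simp
    have "y = t - Im (gg a w)" using yp by (simp add: eta_gg w_def)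
    moreover have "\<bar>Im (gg a w)\<bar> \<le> G" unfolding G_def by (rule abs_Im_le_cmod)
    ultimately have tY: "At \<le> Y + G" unfolding At_def Y_def by linarith
    have GL: "G = nL powr a" unfolding G_def nL_def L_def gg_def by (subst norm_powr_real_powr') auto
    have "G \<le> 1/8 * nL + M" unfolding GL by (rule M) (simp add: nL_def)
    then have G8: "8 * G \<le> nL + 8 * M" by simp
    have w3: "w + 3 \<noteq> 0" by (simp add: w_def complex_eq_iff)
    have ReL: "Re L = ln (norm (w + 3))" unfolding L_def using w3 by (simp add: Re_Ln)
    have "\<bar>Im L\<bar> < pi / 2" unfolding L_def using w3 Re_Ln_pos_lt[of "w+3"] by (simp add: w_def)
    then have ImL: "\<bar>Im L\<bar> \<le> 2" using pi_less_4 by simp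
    have "norm (w + 3) \<le> \<bar>Re (w + 3)\<bar> + \<bar>Im (w + 3)\<bar>" by (rule cmod_le)
    then have n3: "norm (w + 3) \<le> 3 + At" by (simp add: w_def At_def)
    have "1 \<le> norm (w + 3)"
      using complex_Re_le_cmod[of "w+3"] by (simp add: w_def)
    then have lnw: "ln (norm (w + 3)) \<le> ln (3 + At)" using n3 by (intro ln_mono) auto
    have "0 \<le> ln (norm (w + 3))" using \<open>1 \<le> norm (w + 3)\<close> by simp
    have "nL \<le> \<bar>Re L\<bar> + \<bar>Im L\<bar>" unfolding nL_def by (rule cmod_le)
    then have nLb: "nL \<le> ln (3 + At) + 2" using ReL lnw ImL \<open>0 \<le> ln (norm (w + 3))\<close> by linarith
    have lnA: "ln (3 + At) \<le> 2 + At" using ln_le_minus_one[of "3 + At"] by (simp add: At_def)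
    have "7 * At \<le> 8 * Y + 4 + 8 * M" using tY G8 nLb lnA by linarith
    then have "At \<le> 2 * Y + 1 + 2 * M" using ypos M0 by linarith
    moreover have "4 + 2 * M \<le> Y" using yR unfolding R_def Y_def by linarith
    ultimately have "3 + At \<le> 3 * Y" by linarith
    then have "ln (3 + At) \<le> ln (3 * Y)" using ypos by (simp add: At_def)
    also have "\<dots> = ln 3 + ln Y" using ypos by (simp add: ln_mult)
    finally have "ln (3 + At) \<le> 2 + ln Y" using ln3 by linarith
    then have G8': "8 * G \<le> ln Y + 4 + 8 * M" using G8 nLb by linarith
    have "exp (2 + 3 * M) \<le> Y" using yR unfolding R_def Y_def by linarith
    then have "2 + 3 * M \<le> ln Y" using ypos by (simp add: ln_ge_iff)
    then have "2 * G \<le> ln Y" using G8' M0 by linarith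
    then show "psi a y \<ge> - (1/2) * ln \<bar>y\<bar>" using psiG unfolding Y_def by linarith
  qed
qed



lemma dd0:
  assumes "(F has_field_derivative F') (at z)"
  shows "((\<lambda>t. Re (F (z + of_real t))) has_real_derivative Re F') (at 0)"
    and "((\<lambda>t. Re (F (z + \<i> * of_real t))) has_real_derivative Re (\<i> * F')) (at 0)"
proof -
  have a1: "(F has_field_derivative F') (at (z + 1 * of_real 0))" using assms by simp
  from dir_deriv(1)[OF a1] show "((\<lambda>t. Re (F (z + of_real t))) has_real_derivative Re F') (at 0)" by simp
  have a2: "(F has_field_derivative F') (at (z + \<i> * of_real 0))" using assms by simp
  from dir_deriv(1)[OF a2] show "((\<lambda>t. Re (F (z + \<i> * of_real t))) has_real_derivative Re (\<i> * F')) (at 0)" .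
qed

lemma harmonic_Re:
  assumes G: "open G" and hf: "f holomorphic_on G"
  shows "harmonic_on (\<lambda>z. Re (f z)) G"
proof -
  define f1 where "f1 = deriv f"
  define f2 where "f2 = deriv f1"
  have h1: "f1 holomorphic_on G" unfolding f1_def using hf G by (rule holomorphic_deriv)
  have h2: "f2 holomorphic_on G" unfolding f2_def using h1 G by (rule holomorphic_deriv)
  have d1: "(f has_field_derivative f1 z) (at z)" if "z \<in> G" for z
    unfolding f1_def using hf G that by (rule holomorphic_derivI)
  have d2: "(f1 has_field_derivative f2 z) (at z)" if "z \<in> G" for z
    unfolding f2_def using h1 G that by (rule holomorphic_derivI)
  have d2': "((\<lambda>z. \<i> * f1 z) has_field_derivative \<i> * f2 z) (at z)" if "z \<in> G" for z
    using d2[OF that] by (auto intro!: derivative_eq_intros)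
  have c2: "continuous_on G f2" using h2 by (rule holomorphic_on_imp_continuous_on)
  show ?thesis
    unfolding harmonic_on_def
    apply (rule conjI[OF G])
    apply (rule exI[of _ "\<lambda>z. Re (f1 z)"], rule exI[of _ "\<lambda>z. Re (\<i> * f1 z)"],
      rule exI[of _ "\<lambda>z. Re (f2 z)"], rule exI[of _ "\<lambda>z. Re (\<i> * f2 z)"],
      rule exI[of _ "\<lambda>z. Re (\<i> * f2 z)"], rule exI[of _ "\<lambda>z. Re (\<i> * (\<i> * f2 z))"])
  proof (intro conjI ballI)
    fix z assume z: "z \<in> G"
    show "((\<lambda>t. Re (f (z + of_real t))) has_real_derivative Re (f1 z)) (at 0)"
      using dd0(1)[OF d1[OF z]] .
    show "((\<lambda>t. Re (f (z + \<i> * of_real t))) has_real_derivative Re (\<i> * f1 z)) (at 0)"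
      using dd0(2)[OF d1[OF z]] .
    show "((\<lambda>t. Re (f1 (z + of_real t))) has_real_derivative Re (f2 z)) (at 0)"
      using dd0(1)[OF d2[OF z]] .
    show "((\<lambda>t. Re (f1 (z + \<i> * of_real t))) has_real_derivative Re (\<i> * f2 z)) (at 0)"
      using dd0(2)[OF d2[OF z]] .
    show "((\<lambda>t. Re (\<i> * f1 (z + of_real t))) has_real_derivative Re (\<i> * f2 z)) (at 0)"
      using dd0(1)[OF d2'[OF z]] .
    show "((\<lambda>t. Re (\<i> * f1 (z + \<i> * of_real t))) has_real_derivative Re (\<i> * (\<i> * f2 z))) (at 0)"
      using dd0(2)[OF d2'[OF z]] .
    show "Re (f2 z) + Re (\<i> * (\<i> * f2 z)) = 0" by simp
  qed (use c2 in \<open>intro continuous_intros; simp\<close>)+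
qed



lemma csqrt_lb: assumes "0 \<le> Re z" shows "sqrt (norm z) \<le> 2 * Re (csqrt z)"
proof -
  define s where "s = csqrt z"
  have sz: "s * s = z" unfolding s_def using power2_csqrt[of z] by (simp add: power2_eq_square)
  have r: "Re z = Re s * Re s - Im s * Im s" using arg_cong[OF sz, of Re] by simp
  have "norm z = norm s * norm s" using arg_cong[OF sz, of norm] by (simp add: norm_mult)
  also have "\<dots> = Re s * Re s + Im s * Im s" using cmod_power2[of s] by (simp add: power2_eq_square)
  finally have n: "norm z = Re s * Re s + Im s * Im s" .
  have A: "Im s * Im s \<le> Re s * Re s" using r assms by simp
  have B: "0 \<le> Re s * Re s" by simp
  have "norm z \<le> 4 * (Re s * Re s)" using n A B by linarith
  then have "norm z \<le> (2 * Re s)^2" by (simp add: power2_eq_square)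
  then have "sqrt (norm z) \<le> sqrt ((2 * Re s)^2)" by (rule real_sqrt_le_mono)
  also have "\<dots> = \<bar>2 * Re s\<bar>" by (rule real_sqrt_abs)
  also have "\<dots> = 2 * Re s" using Re_csqrt[of z] unfolding s_def[symmetric] by simp
  finally show ?thesis by (simp add: s_def)
qed

lemma L_bound: assumes "0 \<le> Re w"
  shows "norm (Ln (w + 3)) \<le> ln (norm (w + 3)) + 2" and "0 \<le> ln (norm (w + 3))"
    and "norm (gg a w) = norm (Ln (w + 3)) powr a"
proof -
  let ?L = "Ln (w + 3)"
  have r: "-2 < Re w" using assms by simp
  have w3: "w + 3 \<noteq> 0" using assms by (auto simp: complex_eq_iff)
  have "\<bar>Im ?L\<bar> < pi / 2" using w3 Re_Ln_pos_lt[of "w+3"] assms by simp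
  then have ImL: "\<bar>Im ?L\<bar> \<le> 2" using pi_less_4 by simp
  have "1 \<le> norm (w + 3)"
    using complex_Re_le_cmod[of "w+3"] assms by simp
  then show l0: "0 \<le> ln (norm (w + 3))" by simp
  have "norm ?L \<le> \<bar>Re ?L\<bar> + \<bar>Im ?L\<bar>" by (rule cmod_le)
  then show "norm ?L \<le> ln (norm (w + 3)) + 2" using Re_Ln3(1)[OF r] ImL l0 by simp
  show "norm (gg a w) = norm ?L powr a" unfolding gg_def by (subst norm_powr_real_powr') auto
qed

lemma Re_gg: assumes "0 \<le> Re w" "0 < a" "a < 1"
  shows "Re (gg a w) \<ge> cos (a * pi / 2) * norm (Ln (w + 3)) powr a"
proof -
  let ?L = "Ln (w + 3)"
  have r: "-2 < Re w" using assms by simp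
  have RL: "0 < Re ?L" using Re_Ln3(2)[OF r] .
  then have L0: "?L \<noteq> 0" by auto
  have nL: "0 < norm ?L" using L0 by simp
  have im: "\<bar>Im (Ln ?L)\<bar> < pi / 2" using Re_Ln_pos_lt[OF L0] RL by simp
  have "gg a w = exp (of_real a * Ln ?L)" using L0 by (simp add: gg_def powr_def)
  then have "Re (gg a w) = exp (a * Re (Ln ?L)) * cos (a * Im (Ln ?L))" by (simp add: Re_exp)
  also have "exp (a * Re (Ln ?L)) = norm ?L powr a"
    using L0 nL by (simp add: Re_Ln powr_def mult.commute)
  finally have e: "Re (gg a w) = norm ?L powr a * cos (a * Im (Ln ?L))" .
  have "\<bar>a * Im (Ln ?L)\<bar> \<le> a * (pi / 2)"
    using im assms by (simp add: abs_mult)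
  then have "cos (a * pi / 2) \<le> cos \<bar>a * Im (Ln ?L)\<bar>"
    using assms by (intro cos_monotone_0_pi_le) auto
  then have "cos (a * pi / 2) \<le> cos (a * Im (Ln ?L))" by simp
  then have "norm ?L powr a * cos (a * pi / 2) \<le> norm ?L powr a * cos (a * Im (Ln ?L))"
    by (intro mult_left_mono) auto
  then show ?thesis using e by (simp add: mult.commute)
qed

lemma eta_holo: "eta a holomorphic_on {w. 0 < Re w}"
proof -
  have "open {w::complex. 0 < Re w}" by (rule open_halfspace_Re_gt)
  moreover have "\<forall>x\<in>{w. 0 < Re w}. \<exists>f'. (eta a has_field_derivative f') (at x)"
  proof
    fix x :: complex assume "x \<in> {w. 0 < Re w}"
    then have "-2 < Re x" by simp
    from eta_deriv[OF this] show "\<exists>f'. (eta a has_field_derivative f') (at x)" by blast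
  qed
  ultimately show ?thesis by (simp add: holomorphic_on_open)
qed

lemma freq_bound: assumes "0 < a" "a < 1" "l \<le> 0"
  shows "\<exists>C. \<forall>w. 0 < Re w \<longrightarrow> exp (l * Re (eta a w)) \<le> C * Re (csqrt (w + 3))"
proof -
  define e where "e = 1 / (2 * (-l) + 2)"
  have e0: "0 < e" using assms by (simp add: e_def)
  have le: "(-l) * e \<le> 1/2" using assms by (simp add: e_def field_simps)
  obtain M where M0: "M \<ge> 0" and M: "\<And>u::real. 0 \<le> u \<Longrightarrow> u powr a \<le> e * u + M"
    using pow_sub[OF assms(1,2) e0] by auto
  define K where "K = exp (1 + (-l) * M)"
  show ?thesis
  proof (intro exI[of _ "2 * K"] allI impI)
    fix w :: complex assume w: "0 < Re w"
    let ?L = "Ln (w + 3)"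
    define r where "r = norm (w + 3)"
    have r0: "0 < r" unfolding r_def using w by (auto simp: complex_eq_iff)
    define G where "G = norm (gg a w)"
    have Gn: "G = norm ?L powr a" unfolding G_def using L_bound(3) w by simp
    have nLb: "norm ?L \<le> ln r + 2" unfolding r_def using L_bound(1) w by simp
    have "Re (eta a w) = Re w - Re (gg a w)" by (simp add: eta_gg)
    moreover have "Re (gg a w) \<le> G" unfolding G_def by (rule complex_Re_le_cmod)
    ultimately have "Re (eta a w) \<ge> - G" using w by simp
    then have "l * Re (eta a w) \<le> l * (- G)" using assms(3) by (rule mult_left_mono_neg)
    also have "\<dots> = (-l) * G" by simp
    also have "\<dots> \<le> (-l) * (e * norm ?L + M)" unfolding Gn using assms(3)
      by (intro mult_left_mono M) auto
    also have "\<dots> = ((-l) * e) * norm ?L + (-l) * M" by (simp add: algebra_simps)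
    also have "\<dots> \<le> 1/2 * norm ?L + (-l) * M" using le by (intro add_right_mono mult_right_mono) auto
    also have "\<dots> \<le> 1/2 * (ln r + 2) + (-l) * M" using nLb by simp
    also have "\<dots> = ln r * (1/2) + (1 + (-l) * M)" by (simp add: algebra_simps)
    finally have ex: "l * Re (eta a w) \<le> ln r * (1/2) + (1 + (-l) * M)" .
    have "exp (l * Re (eta a w)) \<le> exp (ln r * (1/2) + (1 + (-l) * M))" using ex by simp
    also have "\<dots> = K * exp (ln r * (1/2))" by (simp add: K_def exp_add mult.commute)
    also have "exp (ln r * (1/2)) = sqrt r"
    proof -
      have "sqrt r = r powr (1/2)" using r0 by (simp add: powr_half_sqrt)
      also have "\<dots> = exp (ln r * (1/2))" using r0 by (simp add: powr_def mult.commute)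
      finally show ?thesis by simp
    qed
    also have "K * sqrt r \<le> K * (2 * Re (csqrt (w + 3)))" unfolding r_def using w
      by (intro mult_left_mono csqrt_lb) (auto simp: K_def)
    finally show "exp (l * Re (eta a w)) \<le> 2 * K * Re (csqrt (w + 3))" by simp
  qed
qed



lemma gg_growth: assumes "0 \<le> Re w" "0 < a" "a < 1"
  shows "norm (gg a w) \<le> norm (gg a 1) + norm (w - 1) / 3"
proof -
  have "norm (gg a w - gg a 1) \<le> a / 3 * norm (w - 1)" using gg_lip assms by simp
  also have "\<dots> \<le> 1 / 3 * norm (w - 1)" using assms by (intro mult_right_mono) auto
  finally have "norm (gg a w - gg a 1) \<le> norm (w - 1) / 3" by simp
  moreover have "norm (gg a w) \<le> norm (gg a 1) + norm (gg a w - gg a 1)"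
    using norm_triangle_ineq[of "gg a 1" "gg a w - gg a 1"] by simp
  ultimately show ?thesis by linarith
qed

lemma gg_real: assumes "0 \<le> s" shows "Im (gg a (of_real s)) = 0"
proof -
  have "Ln (of_real s + 3) = of_real (ln (s + 3))"
    using Ln_of_real[of "s + 3"] assms by simp
  moreover have "0 \<le> ln (s + 3)" using assms by simp
  ultimately have "gg a (of_real s) = of_real (ln (s + 3) powr a)"
    unfolding gg_def by (simp add: powr_of_real)
  then show ?thesis by simp
qed

lemma nohalf: assumes "0 < a" "a < 1" "c \<noteq> 0"
  shows "\<exists>w. 0 < Re w \<and> Re (c * eta a w) \<ge> t"
proof -
  define g1 where "g1 = norm (gg a 1)"
  have g10: "0 \<le> g1" by (simp add: g1_def)
  consider "Re c > 0" | "Re c \<le> 0" "Im c \<noteq> 0" | "Re c < 0" "Im c = 0"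
    using assms(3) by (metis complex_eqI linorder_neqE_linordered_idom not_le zero_complex.simps)
  then show ?thesis
  proof cases
    case 1
    define s where "s = max 1 (3/2 * (g1 + \<bar>t\<bar> / Re c))"
    have s1: "1 \<le> s" by (simp add: s_def)
    have "3/2 * (g1 + \<bar>t\<bar> / Re c) \<le> s" by (simp add: s_def)
    then have sb: "3 * (\<bar>t\<bar> / Re c) \<le> 2 * s - 3 * g1" by simp
    let ?w = "complex_of_real s"
    have Gb: "3 * norm (gg a ?w) \<le> 3 * g1 + \<bar>s - 1\<bar>"
    proof -
      have e: "norm (complex_of_real s - 1) = \<bar>s - 1\<bar>" by (metis norm_of_real of_real_1 of_real_diff)
      show ?thesis using gg_growth[of ?w a] assms s1 unfolding g1_def e by (simp add: field_simps)
    qed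
    have "Re (gg a ?w) \<le> norm (gg a ?w)" by (rule complex_Re_le_cmod)
    moreover have "Re (eta a ?w) = s - Re (gg a ?w)" by (simp add: eta_gg)
    ultimately have Rz: "3 * Re (eta a ?w) \<ge> 2 * s - 3 * g1" using Gb s1 by linarith
    have Iz: "Im (eta a ?w) = 0" using gg_real[of s a] s1 by (simp add: eta_gg)
    have "\<bar>t\<bar> = Re c * (\<bar>t\<bar> / Re c)" using 1 by simp
    also have "\<dots> \<le> Re c * Re (eta a ?w)" using 1 sb Rz by (intro mult_left_mono) linarith+
    also have "\<dots> = Re (c * eta a ?w)" using Iz by simp
    finally show ?thesis using s1 by (intro exI[of _ ?w]) auto
  next
    case 2
    define T where "T = 3/2 * (g1 + (\<bar>t\<bar> + \<bar>Re c\<bar>) / \<bar>Im c\<bar>)"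
    have T0: "0 \<le> T" using g10 by (simp add: T_def)
    have Tb: "\<bar>Im c\<bar> * (2 * T / 3 - g1) = \<bar>t\<bar> + \<bar>Re c\<bar>" using 2 by (simp add: T_def field_simps)
    define tau where "tau = - sgn (Im c) * T"
    define w where "w = Complex 1 tau"
    have w1: "0 < Re w" by (simp add: w_def)
    have at: "\<bar>tau\<bar> = T" using 2 T0 by (simp add: tau_def abs_mult)
    have "norm (gg a w) \<le> g1 + norm (w - 1) / 3" using gg_growth[of w a] assms w1 unfolding g1_def by simp
    moreover have "norm (w - 1) = T"
    proof -
      have "w - 1 = Complex 0 tau" by (simp add: w_def complex_eq_iff)
      then show ?thesis using at by (simp add: complex_norm)
    qed
    ultimately have Gb: "norm (gg a w) \<le> g1 + T / 3" by simp
    have "0 \<le> cos (a * pi / 2) * norm (Ln (w + 3)) powr a"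
    proof -
      have "0 \<le> a * pi" using assms by simp
      then have "- pi \<le> a * pi" using pi_gt_zero by linarith
      moreover have "a * pi \<le> pi" using assms by simp
      ultimately show ?thesis using assms by (intro mult_nonneg_nonneg cos_ge_zero) auto
    qed
    then have "0 \<le> Re (gg a w)" using Re_gg[of w a] assms w1 by simp
    then have Rz: "Re (eta a w) \<le> 1" by (simp add: eta_gg w_def)
    have "Re c * 1 \<le> Re c * Re (eta a w)" using 2 Rz by (intro mult_left_mono_neg) auto
    then have A: "Re c \<le> Re c * Re (eta a w)" by simp
    have Iz: "Im (eta a w) = tau - Im (gg a w)" by (simp add: eta_gg w_def)
    have "\<bar>Im (gg a w)\<bar> \<le> norm (gg a w)" by (rule abs_Im_le_cmod)
    then have ib: "\<bar>Im c * Im (gg a w)\<bar> \<le> \<bar>Im c\<bar> * (g1 + T / 3)"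
      using Gb by (simp add: abs_mult) (intro mult_left_mono, auto)
    have ct: "- Im c * tau = \<bar>Im c\<bar> * T" by (simp add: tau_def abs_sgn)
    have "- Im c * Im (eta a w) = \<bar>Im c\<bar> * T + Im c * Im (gg a w)" unfolding Iz using ct by (simp add: right_diff_distrib)
    also have "\<dots> \<ge> \<bar>Im c\<bar> * T - \<bar>Im c\<bar> * (g1 + T / 3)" using ib by linarith
    finally have B: "- Im c * Im (eta a w) \<ge> \<bar>Im c\<bar> * (2 * T / 3 - g1)" by (simp add: algebra_simps)
    have "Re (c * eta a w) = Re c * Re (eta a w) + (- Im c * Im (eta a w))" by simp
    also have "\<dots> \<ge> Re c + (\<bar>t\<bar> + \<bar>Re c\<bar>)"
    proof -
      have B': "\<bar>t\<bar> + \<bar>Re c\<bar> \<le> - Im c * Im (eta a w)" using B Tb by simp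
      show ?thesis using add_mono[OF A B'] by simp
    qed
    finally have "Re (c * eta a w) \<ge> t" by linarith
    then show ?thesis using w1 by blast
  next
    case 3
    define kap where "kap = cos (a * pi / 2)"
    have k0: "0 < kap"
    proof -
      have "0 \<le> a * pi" using assms by simp
      then have "- pi < a * pi" using pi_gt_zero by linarith
      moreover have "a * pi < pi" using assms by simp
      ultimately show ?thesis unfolding kap_def using assms by (intro cos_gt_zero_pi) auto
    qed
    define Q where "Q = (1 + \<bar>t\<bar> / \<bar>Re c\<bar>) / kap"
    have Q0: "0 < Q" using k0 by (simp add: Q_def add_pos_nonneg)
    define tau where "tau = exp (Q powr (1 / a))"
    have tau1: "1 \<le> tau" by (simp add: tau_def)
    have lt: "ln tau powr a = Q" using Q0 assms by (simp add: tau_def powr_powr)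
    define w where "w = Complex 1 tau"
    have w1: "0 < Re w" by (simp add: w_def)
    have "tau \<le> \<bar>Im (w + 3)\<bar>" using tau1 by (simp add: w_def)
    also have "\<dots> \<le> norm (w + 3)" by (rule abs_Im_le_cmod)
    finally have "ln tau \<le> ln (norm (w + 3))" using tau1 by (intro ln_mono) auto
    also have "\<dots> = Re (Ln (w + 3))" using Re_Ln3(1)[of w] w1 by simp
    also have "\<dots> \<le> norm (Ln (w + 3))" by (rule complex_Re_le_cmod)
    finally have "ln tau powr a \<le> norm (Ln (w + 3)) powr a"
      using tau1 assms by (intro powr_mono2) auto
    then have "kap * Q \<le> kap * norm (Ln (w + 3)) powr a" using lt k0 by simp
    also have "\<dots> \<le> Re (gg a w)" using Re_gg[of w a] assms w1 by (simp add: kap_def)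
    finally have "1 + \<bar>t\<bar> / \<bar>Re c\<bar> \<le> Re (gg a w)" using k0 by (simp add: Q_def)
    then have Rz: "Re (eta a w) \<le> - (\<bar>t\<bar> / \<bar>Re c\<bar>)" by (simp add: eta_gg w_def)
    have "\<bar>t\<bar> = (- Re c) * (\<bar>t\<bar> / \<bar>Re c\<bar>)" using 3 by simp
    also have "\<dots> \<le> (- Re c) * (- Re (eta a w))" using 3 Rz by (intro mult_left_mono) auto
    also have "\<dots> = Re (c * eta a w)" using 3 by simp
    finally show ?thesis using w1 by (intro exI[of _ w]) auto
  qed
qed



theorem proposition10p2:
  fixes a :: real
  assumes "0 < a" and "a < 1"
  shows "eta a holomorphic_on {w. 0 < Re w} \<and> inj_on (eta a) {w. 0 < Re w}
    \<and> log_starlike_at_infinity (eta a ` {w. 0 < Re w})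
    \<and> has_p_frequencies (eta a ` {w. 0 < Re w})
    \<and> \<not> (\<exists>c t. c \<noteq> 0 \<and> eta a ` {w. 0 < Re w} \<subseteq> {z. Re (c * z) < t})"
proof (intro conjI)
  let ?S = "{w::complex. 0 < Re w}"
  have oS: "open ?S" by (rule open_halfspace_Re_gt)
  show holo: "eta a holomorphic_on ?S" by (rule eta_holo)
  show inj: "inj_on (eta a) ?S"
    by (rule inj_onI) (use eta_inj assms in \<open>auto\<close>)
  show "log_starlike_at_infinity (eta a ` ?S)"
    unfolding log_starlike_at_infinity_def
  proof (intro exI[of _ "psi a"] conjI allI)
    fix y
    show "psi a differentiable (at y)"
      using differentiableI[OF has_field_derivative_imp_has_derivative[OF psi_deriv(1)[OF assms, of y]]] .
  next
    show "\<exists>K>0. \<forall>y. \<bar>deriv (psi a) y\<bar> \<le> K"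
    proof (intro exI[of _ 1] conjI allI)
      fix y
      show "\<bar>deriv (psi a) y\<bar> \<le> 1"
        using DERIV_imp_deriv[OF psi_deriv(1)[OF assms, of y]] psi_deriv(2)[OF assms, of y] by simp
    qed simp
  next
    obtain R where "R > 0" "\<forall>y. \<bar>y\<bar> \<ge> R \<longrightarrow> psi a y \<ge> - (1/2) * ln \<bar>y\<bar>"
      using psi_growth[OF assms] by blast
    then show "\<exists>R>0. \<exists>b. 0 < b \<and> b < 1 \<and> (\<forall>y. \<bar>y\<bar> \<ge> R \<longrightarrow> psi a y \<ge> - b * ln \<bar>y\<bar>)"
      by (intro exI[of _ R] conjI exI[of _ "1/2"]) auto
  next
    show "eta a ` ?S = {z. psi a (Im z) < Re z}" by (rule Omega_eq[OF assms])
  qed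
  show "has_p_frequencies (eta a ` ?S)"
    unfolding has_p_frequencies_def
  proof (intro exI[of _ 1] conjI allI impI)
    fix l :: real assume l: "l \<le> 0"
    obtain C where C: "\<And>w. 0 < Re w \<Longrightarrow> exp (l * Re (eta a w)) \<le> C * Re (csqrt (w + 3))"
      using freq_bound[OF assms l] by blast
    obtain ginv where gh: "ginv holomorphic_on (eta a ` ?S)" and gi: "\<And>z. z \<in> ?S \<Longrightarrow> ginv (eta a z) = z"
      using holomorphic_has_inverse[OF holo oS inj] by blast
    have oO: "open (eta a ` ?S)" by (rule open_mapping_thm3[OF holo oS inj])
    have hH: "(\<lambda>z. of_real C * csqrt (ginv z + 3)) holomorphic_on (eta a ` ?S)"
    proof (intro holomorphic_intros gh)
      fix z assume "z \<in> eta a ` ?S"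
      then obtain w where w: "w \<in> ?S" "z = eta a w" by blast
      then have "0 < Re (ginv z + 3)" using gi by simp
      then show "ginv z + 3 \<notin> \<real>\<^sub>\<le>\<^sub>0" by (rule not_nonpos)
    qed
    show "(\<lambda>z. exp (of_real l * z)) \<in> hardy_space 1 (eta a ` ?S)"
      unfolding hardy_space_def
    proof (intro CollectI conjI exI[of _ "\<lambda>z. Re (of_real C * csqrt (ginv z + 3))"] ballI)
      show "(\<lambda>z. exp (of_real l * z)) holomorphic_on eta a ` ?S" by (intro holomorphic_intros)
      show "harmonic_on (\<lambda>z. Re (of_real C * csqrt (ginv z + 3))) (eta a ` ?S)"
        by (rule harmonic_Re[OF oO hH])
      fix z assume "z \<in> eta a ` ?S"
      then obtain w where w: "0 < Re w" "z = eta a w" by blast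
      have "norm (exp (of_real l * z)) powr 1 = exp (l * Re (eta a w))" using w by simp
      also have "\<dots> \<le> C * Re (csqrt (w + 3))" by (rule C[OF w(1)])
      also have "\<dots> = Re (of_real C * csqrt (ginv z + 3))" using w gi by simp
      finally show "norm (exp (of_real l * z)) powr 1 \<le> Re (of_real C * csqrt (ginv z + 3))" .
    qed
  qed simp
  show "\<not> (\<exists>c t. c \<noteq> 0 \<and> eta a ` ?S \<subseteq> {z. Re (c * z) < t})"
  proof
    assume "\<exists>c t. c \<noteq> 0 \<and> eta a ` ?S \<subseteq> {z. Re (c * z) < t}"
    then obtain c t where c: "c \<noteq> 0" and sub: "eta a ` ?S \<subseteq> {z. Re (c * z) < t}" by blast
    obtain w where "0 < Re w" "Re (c * eta a w) \<ge> t" using nohalf[OF assms c] by blast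
    with sub show False by force
  qed
qed

end
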